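(* Let $A, B$ be $2n\times 2n$ real symmetric positive semidefinite matrices whose kernels are symplectic subspaces of $\mathbb{R}^{2n}$. If $A$ lies in the convex hull of the symplectic orbit of $B$, i.e. $A = \sum_{i=1}^m \lambda_i M_i^T B M_i$ for some $m\ge 1$, some $M_1,\dots,M_m\in\operatorname{Sp}(2n)$, and some $\lambda_1,\dots,\lambda_m > 0$ with $\sum_i \lambda_i = 1$, then $d(A)\prec^w d(B)$.
   Context: Let $J = \begin{bmatrix} 0 & I_n \\ -I_n & 0\end{bmatrix}$. A real $2n\times 2n$ matrix $M$ is symplectic if $M^TJM = J$; $\operatorname{Sp}(2n)$ denotes the group of such matrices. A linear subspace $W\subseteq\mathbb{R}^{2n}$ is symplectic if for every $0\neq u\in W$ there is $v\in W$ with $u^TJv\neq 0$. For a real symmetric positive semidefinite $2n\times 2n$ matrix $A$ whose kernel is a symplectic subspace, there is $M\in\operatorname{Sp}(2n)$ with $M^TAM = D\oplus D$ where $D$ is an $n\times n$ diagonal matrix with non-negative entries, unique up to permutation of its diagonal entries; these are the symplectic eigenvalues of $A$, and $d(A) = (d_1(A),\dots,d_n(A))$ denotes them in non-decreasing order. For $x\in\mathbb{R}^n$, $x^\uparrow$ denotes $x$ rearranged in non-decreasing order. For $x,y\in\mathbb{R}^n$, $x\prec^w y$ ($x$ is weakly supermajorized by $y$) means $\sum_{j=1}^k x^\uparrow_j \ge \sum_{j=1}^k y^\uparrow_j$ for all $1\le k\le n$. *)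

theory Defs
  imports "HOL-Analysis.Analysis" "HOL-Library.Multiset"
begin

text \<open>We model R^{2n} as real ^ ('n + 'n): the first copy of 'n gives the
coordinates 1..n, the second copy gives n+1..2n.  2n x 2n matrices are
real ^ ('n + 'n) ^ ('n + 'n).\<close>

type_synonym 'n smat = "real ^ ('n + 'n) ^ ('n + 'n)"
type_synonym 'n svec = "real ^ ('n + 'n)"

definition Jmat :: "('n::finite) smat" where
  "Jmat = (\<chi> p q. case (p, q) of
              (Inl i, Inr j) \<Rightarrow> (if i = j then 1 else 0)
            | (Inr i, Inl j) \<Rightarrow> (if i = j then -1 else 0)
            | _ \<Rightarrow> 0)"

definition symplectic :: "('n::finite) smat \<Rightarrow> bool" where
  "symplectic M \<longleftrightarrow> transpose M ** Jmat ** M = Jmat"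

definition symplectic_subspace :: "('n::finite) svec set \<Rightarrow> bool" where
  "symplectic_subspace W \<longleftrightarrow> subspace W \<and>
     (\<forall>u\<in>W. u \<noteq> 0 \<longrightarrow> (\<exists>v\<in>W. u \<bullet> (Jmat *v v) \<noteq> 0))"

definition kernel :: "('n::finite) smat \<Rightarrow> 'n svec set" where
  "kernel A = {x. A *v x = 0}"

definition sym_psd :: "('n::finite) smat \<Rightarrow> bool" where
  "sym_psd A \<longleftrightarrow> transpose A = A \<and> (\<forall>x. 0 \<le> x \<bullet> (A *v x))"

definition diag_dsum :: "(('n::finite) \<Rightarrow> real) \<Rightarrow> 'n smat" where
  "diag_dsum d = (\<chi> p q. case (p, q) of
              (Inl i, Inl j) \<Rightarrow> (if i = j then d i else 0)
            | (Inr i, Inr j) \<Rightarrow> (if i = j then d i else 0)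
            | _ \<Rightarrow> 0)"

definition symp_eigs :: "('n::finite) smat \<Rightarrow> real list" where
  "symp_eigs A = (THE ds. sorted ds \<and>
      (\<exists>M d. symplectic M \<and> (\<forall>i. 0 \<le> d i) \<and>
             transpose M ** A ** M = diag_dsum d \<and>
             mset ds = image_mset d (mset_set (UNIV :: 'n set))))"

definition weak_supmaj :: "real list \<Rightarrow> real list \<Rightarrow> bool" where
  "weak_supmaj x y \<longleftrightarrow> length x = length y \<and>
     (\<forall>k. 1 \<le> k \<and> k \<le> length x \<longrightarrow>
        sum_list (take k (sort x)) \<ge> sum_list (take k (sort y)))"

end

theory Submission
  imports Defs
begin

definition om :: "('n::finite) svec \<Rightarrow> 'n svec \<Rightarrow> real" where
  "om x y = x \<bullet> (Jmat *v y)"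

lemma sum_UNIV_plus:
  "(\<Sum>x\<in>(UNIV::('a::finite+'b::finite) set). g x) = (\<Sum>i\<in>UNIV. g (Inl i)) + (\<Sum>i\<in>UNIV. g (Inr i))"
  by (subst UNIV_Plus_UNIV[symmetric], subst sum.Plus) (auto simp: o_def)

lemma if0_mult: "(if P then a else 0) * (b::real) = (if P then a * b else 0)" by simp

lemma J_Inl [simp]: "(Jmat *v y) $ Inl i = y $ Inr i"
  by (simp add: matrix_vector_mult_def Jmat_def sum_UNIV_plus if0_mult)

lemma J_Inr [simp]: "(Jmat *v y) $ Inr i = - y $ Inl i"
  by (simp add: matrix_vector_mult_def Jmat_def sum_UNIV_plus if0_mult)

lemma vec_sum_eq: "(x::('n::finite) svec) = y \<longleftrightarrow> (\<forall>i. x $ Inl i = y $ Inl i \<and> x $ Inr i = y $ Inr i)"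
  by (metis sumE vec_eq_iff)

lemma JJ [simp]: "Jmat *v (Jmat *v v) = - (v::('n::finite) svec)"
  by (simp add: vec_sum_eq)

lemma inner_sum_expand: "(x::('n::finite) svec) \<bullet> y = (\<Sum>i\<in>UNIV. x$Inl i * y$Inl i + x$Inr i * y$Inr i)"
  by (simp add: inner_vec_def sum_UNIV_plus sum.distrib)

lemma J_inner_J [simp]: "(Jmat *v v) \<bullet> (Jmat *v w) = v \<bullet> (w::('n::finite) svec)"
  by (simp add: inner_sum_expand add.commute)

lemma J_inner_left: "(Jmat *v v) \<bullet> w = - (v \<bullet> (Jmat *v (w::('n::finite) svec)))"
  by (simp add: inner_sum_expand sum_negf[symmetric] algebra_simps)

lemma om_expand: "om x y = (\<Sum>i\<in>UNIV. x$Inl i * y$Inr i - x$Inr i * y$Inl i)"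
  by (simp add: om_def inner_sum_expand)

lemma om_antisym: "om x y = - om y x"
  by (metis om_def J_inner_left inner_commute)

lemma om_self [simp]: "om x x = 0"
  using om_antisym[of x x] by simp

lemma om_zero_left [simp]: "om 0 z = 0" by (simp add: om_def)
lemma om_zero_right [simp]: "om z 0 = 0" by (simp add: om_def)
lemma om_add_left: "om (x + y) z = om x z + om y z" by (simp add: om_def inner_add_left)
lemma om_add_right: "om z (x + y) = om z x + om z y" by (simp add: om_def inner_add_right matrix_vector_right_distrib)
lemma om_scale_left: "om (c *\<^sub>R x) z = c * om x z" by (simp add: om_def)
lemma om_scale_right: "om z (c *\<^sub>R x) = c * om z x" by (simp add: om_def matrix_vector_mult_scaleR)
lemma om_diff_left: "om (x - y) z = om x z - om y z" by (simp add: om_def inner_diff_left)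
lemma om_diff_right: "om z (x - y) = om z x - om z y" by (simp add: om_def inner_diff_right matrix_vector_mult_diff_distrib)
lemma om_neg_right: "om z (- x) = - om z x" using om_scale_right[of z "-1" x] by simp
lemma om_sum_right: "finite I \<Longrightarrow> om z (\<Sum>i\<in>I. f i) = (\<Sum>i\<in>I. om z (f i))"
  by (induct I rule: finite_induct) (auto simp: om_add_right)
lemma om_sum_left: "finite I \<Longrightarrow> om (\<Sum>i\<in>I. f i) z = (\<Sum>i\<in>I. om (f i) z)"
  by (induct I rule: finite_induct) (auto simp: om_add_left)

lemma mv_inner: "(M *v x) \<bullet> y = x \<bullet> (transpose M *v (y::real^'n::finite))"
  by (metis dot_lmul_matrix vector_transpose_matrix)

lemma mv_inner2: "x \<bullet> (M *v y) = (transpose M *v x) \<bullet> (y::real^'n::finite)"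
  by (metis dot_lmul_matrix vector_transpose_matrix inner_commute)

lemma symplectic_om: "symplectic M \<Longrightarrow> om (M *v x) (M *v y) = om x y"
  unfolding symplectic_def om_def
  by (metis mv_inner matrix_vector_mul_assoc)

lemma mv_neg [simp]: "A *v (- x) = - (A *v (x::real^'m::finite))"
  using matrix_vector_mult_scaleR[of A "-1" x] by simp

lemma om_J: "om x y = x \<bullet> (Jmat *v y)" by (simp add: om_def)
lemma Jmat_entries [simp]:
  "Jmat $ Inl i $ Inl j = 0" "Jmat $ Inr i $ Inr j = 0"
  "Jmat $ Inl i $ Inr j = (if i = j then 1 else 0)"
  "Jmat $ Inr i $ Inl j = (if i = j then -1 else 0)"
  by (simp_all add: Jmat_def)

lemma diag_entries [simp]:
  "diag_dsum d $ Inl i $ Inr j = 0" "diag_dsum d $ Inr i $ Inl j = 0"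
  "diag_dsum d $ Inl i $ Inl j = (if i = j then d i else 0)"
  "diag_dsum d $ Inr i $ Inr j = (if i = j then d i else 0)"
  by (simp_all add: diag_dsum_def)

lemma quad0:
  fixes a b :: real
  assumes "\<forall>t. a * t + b * t^2 \<le> 0"
  shows "a = 0"
proof (rule ccontr)
  assume a: "a \<noteq> 0"
  define c where "c = \<bar>b\<bar> + 1"
  have pos: "c > 0" "c + b > 0" by (auto simp: c_def abs_if)
  define t where "t = a / c"
  have "a * t + b * t^2 = (a^2 / c^2) * (c + b)"
    using pos by (simp add: t_def field_simps power2_eq_square)
  moreover have "(a^2 / c^2) * (c + b) > 0"
    using a pos by (intro mult_pos_pos divide_pos_pos) auto
  ultimately show False using assms by (metis not_le)
qed

lemma sym_inner: "transpose A = A \<Longrightarrow> x \<bullet> (A *v y) = y \<bullet> (A *v (x::real^'n::finite))"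
  by (metis mv_inner2 inner_commute)

lemma qf_expand:
  assumes "transpose A = A"
  shows "(x + t *\<^sub>R y) \<bullet> (A *v (x + t *\<^sub>R y)) =
         x \<bullet> (A *v x) + 2 * t * (y \<bullet> (A *v x)) + t^2 * (y \<bullet> (A *v (y::real^'n::finite)))"
  using sym_inner[OF assms, of x y]
  by (simp add: matrix_vector_right_distrib matrix_vector_mult_scaleR inner_add_left inner_add_right
      algebra_simps power2_eq_square)

lemma psd_zero:
  assumes "sym_psd A" "x \<bullet> (A *v x) = 0"
  shows "A *v x = 0"
proof -
  have s: "transpose A = A" and p: "\<And>z. 0 \<le> z \<bullet> (A *v z)" using assms(1) by (auto simp: sym_psd_def)
  let ?y = "A *v x"
  have "\<forall>t. (- 2 * (?y \<bullet> (A *v x))) * t + (- (?y \<bullet> (A *v ?y))) * t^2 \<le> 0"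
  proof
    fix t
    have "0 \<le> (x + t *\<^sub>R ?y) \<bullet> (A *v (x + t *\<^sub>R ?y))" by (rule p)
    then show "(- 2 * (?y \<bullet> (A *v x))) * t + (- (?y \<bullet> (A *v ?y))) * t^2 \<le> 0"
      unfolding qf_expand[OF s] assms(2) by (simp add: algebra_simps)
  qed
  from quad0[OF this] have "?y \<bullet> ?y = 0" by simp
  then show ?thesis by simp
qed

lemma psd_pos:
  assumes "sym_psd A" "A *v x \<noteq> 0"
  shows "x \<bullet> (A *v x) > 0"
  using psd_zero[OF assms(1)] assms unfolding sym_psd_def by (metis order_le_less)

definition wfam :: "('n::finite) smat \<Rightarrow> 'n set \<Rightarrow> ('n \<Rightarrow> 'n svec) \<Rightarrow> ('n \<Rightarrow> 'n svec) \<Rightarrow> ('n \<Rightarrow> real) \<Rightarrow> bool" where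
  "wfam A I e f d \<longleftrightarrow>
     (\<forall>i\<in>I. \<forall>j\<in>I. om (e i) (f j) = (if i = j then 1 else 0) \<and> om (e i) (e j) = 0 \<and> om (f i) (f j) = 0) \<and>
     (\<forall>i\<in>I. 0 \<le> d i \<and> A *v e i = d i *\<^sub>R (Jmat *v f i) \<and> A *v f i = - d i *\<^sub>R (Jmat *v e i))"

lemma wfam_insert:
  assumes w: "wfam A I e f d" and i0: "i0 \<notin> I"
    and xV: "\<forall>i\<in>I. om x (e i) = 0 \<and> om x (f i) = 0"
    and yV: "\<forall>i\<in>I. om y (e i) = 0 \<and> om y (f i) = 0"
    and xy: "om x y = 1" and c: "0 \<le> c" and Ax: "A *v x = c *\<^sub>R (Jmat *v y)"
    and Ay: "A *v y = - c *\<^sub>R (Jmat *v x)"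
  shows "wfam A (insert i0 I) (e(i0 := x)) (f(i0 := y)) (d(i0 := c))"
proof -
  have a1: "om (e i) x = 0" "om (f i) x = 0" "om (e i) y = 0" "om (f i) y = 0" if "i \<in> I" for i
    using xV yV that om_antisym[of "e i" x] om_antisym[of "f i" x] om_antisym[of "e i" y] om_antisym[of "f i" y]
    by auto
  have a2: "om y x = -1" using om_antisym[of y x] xy by simp
  show ?thesis
    using w i0 xV yV xy c Ax Ay a1 a2 unfolding wfam_def by (auto simp del: om_self) (auto)
qed

lemma V_nonzero:
  fixes e f :: "'n::finite \<Rightarrow> 'n svec"
  assumes "i0 \<notin> I"
  shows "\<exists>z. z \<noteq> 0 \<and> (\<forall>i\<in>I. om z (e i) = 0 \<and> om z (f i) = 0)"
proof -
  let ?G = "(\<lambda>v. Jmat *v v) ` (e ` I \<union> f ` I)"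
  let ?U = "span ?G"
  have fin: "finite ?G" by simp
  have "card ?G \<le> card (e ` I \<union> f ` I)" by (rule card_image_le) simp
  also have "\<dots> \<le> card (e ` I) + card (f ` I)" by (rule card_Un_le)
  also have "\<dots> \<le> card I + card I" by (intro add_mono card_image_le) auto
  also have "card I < card (UNIV :: 'n set)"
    using assms by (intro psubset_card_mono) auto
  finally have cG: "card ?G < 2 * CARD('n)" by simp
  have dU: "dim ?U \<le> card ?G" by (rule dim_le_card) (auto simp: fin)
  have "dim {y \<in> UNIV. \<forall>x\<in>?U. orthogonal x y} + dim ?U = dim (UNIV :: 'n svec set)"
    by (rule dim_subspace_orthogonal_to_vectors) auto
  moreover have "dim (UNIV :: 'n svec set) = 2 * CARD('n)"
    by (simp add: card_UNIV_sum)
  ultimately have "dim {y \<in> UNIV. \<forall>x\<in>?U. orthogonal x y} \<noteq> 0" using dU cG by linarith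
  then obtain z where z: "z \<noteq> 0" "\<forall>x\<in>?U. orthogonal x z" by auto
  have "\<forall>i\<in>I. om z (e i) = 0 \<and> om z (f i) = 0"
  proof
    fix i assume i: "i \<in> I"
    have "Jmat *v e i \<in> ?U" "Jmat *v f i \<in> ?U" using i by (auto intro: span_base)
    then show "om z (e i) = 0 \<and> om z (f i) = 0"
      using z(2) by (auto simp: om_def orthogonal_def inner_commute)
  qed
  then show ?thesis using z(1) by blast
qed

lemma L_inv:
  assumes w: "wfam A I e f d" and s: "transpose A = A"
    and z: "\<forall>i\<in>I. om z (e i) = 0 \<and> om z (f i) = 0"
  shows "\<forall>i\<in>I. om (Jmat *v (A *v z)) (e i) = 0 \<and> om (Jmat *v (A *v z)) (f i) = 0"
proof
  fix i assume i: "i \<in> I"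
  have ae: "A *v e i = d i *\<^sub>R (Jmat *v f i)" and af: "A *v f i = - d i *\<^sub>R (Jmat *v e i)"
    using w i by (auto simp: wfam_def)
  have "om (Jmat *v (A *v z)) (e i) = z \<bullet> (A *v e i)"
    by (simp add: om_def sym_inner[OF s] inner_commute)
  also have "\<dots> = d i * om z (f i)" by (simp add: ae om_def)
  finally have 1: "om (Jmat *v (A *v z)) (e i) = 0" using z i by simp
  have "om (Jmat *v (A *v z)) (f i) = z \<bullet> (A *v f i)"
    by (simp add: om_def sym_inner[OF s] inner_commute)
  also have "\<dots> = - d i * om z (e i)" by (simp add: af om_def)
  finally have 2: "om (Jmat *v (A *v z)) (f i) = 0" using z i by simp
  show "om (Jmat *v (A *v z)) (e i) = 0 \<and> om (Jmat *v (A *v z)) (f i) = 0" using 1 2 by simp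
qed

lemma V_subspace: "subspace {z. \<forall>i\<in>I. om z (e i) = 0 \<and> om z (f i) = 0}"
  unfolding subspace_def by (auto simp: om_add_left om_scale_left)

lemma kernel_case:
  assumes w: "wfam A I e f d" and A: "sym_psd A" and K: "symplectic_subspace (kernel A)"
    and xV: "\<forall>i\<in>I. om x (e i) = 0 \<and> om x (f i) = 0" and x0: "x \<noteq> 0" and Ax: "A *v x = 0"
  shows "\<exists>y. (\<forall>i\<in>I. om y (e i) = 0 \<and> om y (f i) = 0) \<and> om x y = 1 \<and> A *v y = 0"
proof -
  have s: "transpose A = A" using A by (simp add: sym_psd_def)
  have ksub: "subspace (kernel A)" using K by (simp add: symplectic_subspace_def)
  obtain v where v: "A *v v = 0" "om x v \<noteq> 0"
    using K x0 Ax unfolding symplectic_subspace_def kernel_def om_def by auto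
  define y' where "y' = v - (\<Sum>i\<in>I. om (e i) v *\<^sub>R f i - om (f i) v *\<^sub>R e i)"
  have fin: "finite I" by simp
  have terms: "om (e i) v *\<^sub>R f i - om (f i) v *\<^sub>R e i \<in> kernel A" if i: "i \<in> I" for i
  proof -
    have ae: "A *v e i = d i *\<^sub>R (Jmat *v f i)" and af: "A *v f i = - d i *\<^sub>R (Jmat *v e i)"
      using w i by (auto simp: wfam_def)
    show ?thesis
    proof (cases "d i = 0")
      case True
      then have "e i \<in> kernel A" "f i \<in> kernel A" using ae af by (auto simp: kernel_def)
      then show ?thesis using ksub by (intro subspace_diff subspace_scale) auto
    next
      case False
      have "d i * om (e i) v = ((A *v f i) \<bullet> v)" by (simp add: af om_def J_inner_left)
      also have "\<dots> = (v \<bullet> (A *v f i))" by (simp add: inner_commute)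
      also have "\<dots> = 0" using sym_inner[OF s, of v "f i"] v(1) by simp
      finally have 1: "om (e i) v = 0" using False by simp
      have "d i * om (f i) v = - ((A *v e i) \<bullet> v)" by (simp add: ae om_def J_inner_left)
      also have "\<dots> = - (v \<bullet> (A *v e i))" by (simp add: inner_commute)
      also have "\<dots> = 0" using sym_inner[OF s, of v "e i"] v(1) by simp
      finally have 2: "om (f i) v = 0" using False by simp
      show ?thesis using 1 2 ksub by (simp add: subspace_0)
    qed
  qed
  have "(\<Sum>i\<in>I. om (e i) v *\<^sub>R f i - om (f i) v *\<^sub>R e i) \<in> kernel A"
    by (rule subspace_sum[OF ksub]) (use terms in auto)
  then have yk: "y' \<in> kernel A" unfolding y'_def
    using ksub v(1) by (intro subspace_diff) (auto simp: kernel_def)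
  have omI: "\<forall>i\<in>I. \<forall>j\<in>I. om (e i) (f j) = (if i = j then 1 else 0) \<and> om (e i) (e j) = 0 \<and> om (f i) (f j) = 0"
    using w by (simp add: wfam_def)
  have yV: "\<forall>j\<in>I. om y' (e j) = 0 \<and> om y' (f j) = 0"
  proof
    fix j assume j: "j \<in> I"
    have "om y' (e j) = om v (e j) - (\<Sum>i\<in>I. om (e i) v * om (f i) (e j) - om (f i) v * om (e i) (e j))"
      by (simp add: y'_def om_diff_left om_sum_left om_scale_left)
    also have "(\<Sum>i\<in>I. om (e i) v * om (f i) (e j) - om (f i) v * om (e i) (e j)) = (\<Sum>i\<in>I. if i = j then - om (e j) v else 0)"
    proof (rule sum.cong)
      fix i assume i: "i \<in> I"
      have "om (f i) (e j) = - (if j = i then 1 else 0)" using omI i j om_antisym[of "f i" "e j"] by auto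
      then show "om (e i) v * om (f i) (e j) - om (f i) v * om (e i) (e j) = (if i = j then - om (e j) v else 0)"
        using omI i j by auto
    qed simp
    also have "\<dots> = - om (e j) v" using j by simp
    finally have 1: "om y' (e j) = 0" using om_antisym[of v "e j"] by simp
    have "om y' (f j) = om v (f j) - (\<Sum>i\<in>I. om (e i) v * om (f i) (f j) - om (f i) v * om (e i) (f j))"
      by (simp add: y'_def om_diff_left om_sum_left om_scale_left)
    also have "(\<Sum>i\<in>I. om (e i) v * om (f i) (f j) - om (f i) v * om (e i) (f j)) = (\<Sum>i\<in>I. if i = j then - om (f j) v else 0)"
    proof (rule sum.cong)
      fix i assume i: "i \<in> I"
      show "om (e i) v * om (f i) (f j) - om (f i) v * om (e i) (f j) = (if i = j then - om (f j) v else 0)"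
        using omI i j by auto
    qed simp
    also have "\<dots> = - om (f j) v" using j by simp
    finally have 2: "om y' (f j) = 0" using om_antisym[of v "f j"] by simp
    show "om y' (e j) = 0 \<and> om y' (f j) = 0" using 1 2 by simp
  qed
  have "om x y' = om x v - (\<Sum>i\<in>I. om (e i) v * om x (f i) - om (f i) v * om x (e i))"
    by (simp add: y'_def om_diff_right om_sum_right om_scale_right)
  also have "(\<Sum>i\<in>I. om (e i) v * om x (f i) - om (f i) v * om x (e i)) = 0"
    using xV by (intro sum.neutral) auto
  finally have xy: "om x y' = om x v" by simp
  define y where "y = (1 / om x y') *\<^sub>R y'"
  have "om x y = 1" using xy v(2) by (simp add: y_def om_scale_right)
  moreover have "A *v y = 0" using yk by (simp add: y_def kernel_def matrix_vector_mult_scaleR)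
  moreover have "\<forall>i\<in>I. om y (e i) = 0 \<and> om y (f i) = 0" using yV by (simp add: y_def om_scale_left)
  ultimately show ?thesis by blast
qed

lemma cont_qf: "continuous_on S (\<lambda>x. x \<bullet> (A *v (x::real^'m::finite)))"
  by (intro continuous_intros linear_continuous_on matrix_vector_mul_bounded_linear)

lemma cont_qfL: "continuous_on S (\<lambda>x. (Jmat *v (A *v x)) \<bullet> (A *v (Jmat *v (A *v (x::('n::finite) svec)))))"
proof -
  have b: "bounded_linear (\<lambda>x. Jmat *v (A *v (x::'n svec)))"
    by (rule bounded_linear_compose[OF matrix_vector_mul_bounded_linear matrix_vector_mul_bounded_linear])
  have b2: "bounded_linear (\<lambda>x. A *v (Jmat *v (A *v (x::'n svec))))"
    by (rule bounded_linear_compose[OF matrix_vector_mul_bounded_linear b])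
  show ?thesis
    by (intro continuous_on_inner linear_continuous_on b b2)
qed

lemma pos_case:
  fixes A :: "('n::finite) smat"
  assumes w: "wfam A I e f d" and A: "sym_psd A"
    and Vdef: "V = {z. \<forall>i\<in>I. om z (e i) = 0 \<and> om z (f i) = 0}"
    and nz: "z0 \<in> V" "z0 \<noteq> 0"
    and pos: "\<forall>x\<in>V. x \<noteq> 0 \<longrightarrow> A *v x \<noteq> 0"
  shows "\<exists>x y c. x \<in> V \<and> y \<in> V \<and> om x y = 1 \<and> 0 \<le> c \<and>
           A *v x = c *\<^sub>R (Jmat *v y) \<and> A *v y = - c *\<^sub>R (Jmat *v x)"
proof -
  have s: "transpose A = A" using A by (simp add: sym_psd_def)
  define q where "q x = x \<bullet> (A *v x)" for x
  define L where "L x = Jmat *v (A *v x)" for x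
  have Vs: "subspace V" unfolding Vdef by (rule V_subspace)
  have LV: "L x \<in> V" if "x \<in> V" for x
    using L_inv[OF w s, of x] that unfolding Vdef L_def by auto
  have qpos: "q x > 0" if "x \<in> V" "x \<noteq> 0" for x
    unfolding q_def using psd_pos[OF A] pos that by auto
  have Lnz: "L x \<noteq> 0" if "x \<in> V" "x \<noteq> 0" for x
  proof
    assume "L x = 0"
    then have "Jmat *v L x = 0" by simp
    then have "A *v x = 0" unfolding L_def by simp
    then show False using pos that by auto
  qed
  have qL: "q (L x) > 0" if "x \<in> V" "x \<noteq> 0" for x
    using qpos[OF LV[OF that(1)] Lnz[OF that]] .
  define R where "R x = q (L x) / q x" for x
  define S where "S = V \<inter> sphere 0 1"
  have Scomp: "compact S" unfolding S_def
    by (intro closed_Int_compact closed_subspace Vs compact_sphere)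
  have Sne: "S \<noteq> {}"
  proof -
    have "(1 / norm z0) *\<^sub>R z0 \<in> S" using nz Vs by (auto simp: S_def subspace_scale)
    then show ?thesis by blast
  qed
  have Scont: "continuous_on S R"
    unfolding R_def
  proof (intro continuous_on_divide)
    show "continuous_on S (\<lambda>x. q (L x))" unfolding q_def L_def by (rule cont_qfL)
    show "continuous_on S q" unfolding q_def by (rule cont_qf)
    show "\<forall>x\<in>S. q x \<noteq> 0"
    proof
      fix x assume "x \<in> S"
      then have "x \<in> V" "x \<noteq> 0" by (auto simp: S_def)
      then show "q x \<noteq> 0" using qpos by force
    qed
  qed
  obtain x0 where x0S: "x0 \<in> S" and x0max: "\<forall>y\<in>S. R y \<le> R x0"
    using continuous_attains_sup[OF Scomp Sne Scont] by blast
  have x0V: "x0 \<in> V" and x0nz: "x0 \<noteq> 0" using x0S by (auto simp: S_def)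
  define \<mu> where "\<mu> = R x0"
  have qsc: "q (c *\<^sub>R x) = c^2 * q x" for c x
    by (simp add: q_def matrix_vector_mult_scaleR power2_eq_square)
  have Lsc: "L (c *\<^sub>R x) = c *\<^sub>R L x" for c x
    by (simp add: L_def matrix_vector_mult_scaleR)
  have bound: "q (L z) \<le> \<mu> * q z" if "z \<in> V" for z
  proof (cases "z = 0")
    case True then show ?thesis by (simp add: q_def L_def)
  next
    case False
    let ?z = "(1 / norm z) *\<^sub>R z"
    have "?z \<in> S" using that False Vs by (auto simp: S_def subspace_scale)
    then have "R ?z \<le> \<mu>" using x0max \<mu>_def by auto
    moreover have "R ?z = R z" unfolding R_def Lsc qsc using False by simp
    ultimately have "q (L z) / q z \<le> \<mu>" by (simp add: R_def)
    then show ?thesis using qpos[OF that False] by (simp add: divide_le_eq)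
  qed
  have q0: "q (L x0) = \<mu> * q x0" using qpos[OF x0V x0nz] by (simp add: \<mu>_def R_def)
  have qexp: "q (x + t *\<^sub>R y) = q x + 2 * t * (y \<bullet> (A *v x)) + t^2 * q y" for x y t
    unfolding q_def by (rule qf_expand[OF s])
  have crit: "h \<bullet> (A *v (- L (L x0) - \<mu> *\<^sub>R x0)) = 0" if hV: "h \<in> V" for h
  proof -
    have "\<forall>t. 2 * (L h \<bullet> (A *v L x0) - \<mu> * (h \<bullet> (A *v x0))) * t + (q (L h) - \<mu> * q h) * t^2 \<le> 0"
    proof
      fix t
      have "x0 + t *\<^sub>R h \<in> V" using x0V hV Vs by (intro subspace_add subspace_scale) auto
      from bound[OF this] have "q (L x0 + t *\<^sub>R L h) \<le> \<mu> * q (x0 + t *\<^sub>R h)"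
        by (simp add: L_def matrix_vector_right_distrib matrix_vector_mult_scaleR)
      then show "2 * (L h \<bullet> (A *v L x0) - \<mu> * (h \<bullet> (A *v x0))) * t + (q (L h) - \<mu> * q h) * t^2 \<le> 0"
        unfolding qexp q0 by (simp add: algebra_simps)
    qed
    from quad0[OF this] have "L h \<bullet> (A *v L x0) = \<mu> * (h \<bullet> (A *v x0))" by simp
    moreover have "L h \<bullet> (A *v L x0) = - (h \<bullet> (A *v L (L x0)))"
      unfolding L_def J_inner_left by (simp add: sym_inner[OF s, of "A *v _"] sym_inner[OF s, of h] inner_commute)
    ultimately show ?thesis
      by (simp add: matrix_vector_mult_diff_distrib matrix_vector_mult_scaleR inner_diff_right)
  qed
  define w0 where "w0 = - L (L x0) - \<mu> *\<^sub>R x0"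
  have w0V: "w0 \<in> V" unfolding w0_def using Vs LV[OF LV[OF x0V]] x0V
    by (intro subspace_diff subspace_neg subspace_scale) auto
  have "q w0 = 0" using crit[OF w0V] by (simp add: q_def w0_def)
  then have "A *v w0 = 0" using psd_zero[OF A] by (simp add: q_def)
  then have "w0 = 0" using pos w0V by blast
  then have "- L (L x0) = \<mu> *\<^sub>R x0" by (simp add: w0_def algebra_simps)
  then have LL: "L (L x0) = - \<mu> *\<^sub>R x0" by (metis minus_minus scaleR_minus_left)
  have ALx: "A *v L x0 = \<mu> *\<^sub>R (Jmat *v x0)"
  proof -
    have "Jmat *v (Jmat *v (A *v L x0)) = Jmat *v (- \<mu> *\<^sub>R x0)" using LL by (simp add: L_def)
    then show ?thesis by (simp add: matrix_vector_mult_scaleR)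
  qed
  have mupos: "\<mu> > 0" unfolding \<mu>_def R_def using qL[OF x0V x0nz] qpos[OF x0V x0nz] by simp
  define dd where "dd = sqrt \<mu>"
  have ddpos: "dd > 0" and dd2: "dd * dd = \<mu>" using mupos by (auto simp: dd_def)
  define s0 where "s0 = sqrt (dd / q x0)"
  have s02: "s0 * s0 = dd / q x0" using ddpos qpos[OF x0V x0nz] by (simp add: s0_def)
  define e0 where "e0 = s0 *\<^sub>R x0"
  define f0 where "f0 = - (1 / dd) *\<^sub>R L e0"
  have e0V: "e0 \<in> V" unfolding e0_def using Vs x0V by (intro subspace_scale) auto
  have f0V: "f0 \<in> V" unfolding f0_def using Vs LV[OF e0V] by (intro subspace_scale) auto
  have Jf: "Jmat *v f0 = (1 / dd) *\<^sub>R (A *v e0)"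
    by (simp add: f0_def L_def matrix_vector_mult_scaleR)
  have Ae: "A *v e0 = dd *\<^sub>R (Jmat *v f0)" using ddpos by (simp add: Jf)
  have Af: "A *v f0 = - dd *\<^sub>R (Jmat *v e0)"
  proof -
    have "A *v f0 = - (1 / dd) *\<^sub>R (A *v L e0)" by (simp add: f0_def matrix_vector_mult_scaleR)
    also have "A *v L e0 = (s0 * \<mu>) *\<^sub>R (Jmat *v x0)" by (simp add: e0_def Lsc matrix_vector_mult_scaleR ALx)
    finally show ?thesis using ddpos dd2[symmetric] by (simp add: e0_def matrix_vector_mult_scaleR)
  qed
  have "om e0 f0 = (1 / dd) * q e0" by (simp add: om_def Jf q_def)
  also have "\<dots> = (1 / dd) * (s0 * s0) * q x0" by (simp add: e0_def qsc power2_eq_square)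
  also have "\<dots> = 1" using s02 ddpos qpos[OF x0V x0nz] by simp
  finally have "om e0 f0 = 1" .
  then show ?thesis using e0V f0V Ae Af ddpos by (intro exI[of _ e0] exI[of _ f0] exI[of _ dd]) auto
qed

lemma wfam_exists:
  fixes A :: "('n::finite) smat"
  assumes A: "sym_psd A" and K: "symplectic_subspace (kernel A)"
  shows "\<exists>e f d. wfam A I e f d"
proof -
  have "finite I" by simp
  then show ?thesis
  proof (induction I rule: finite_induct)
    case empty then show ?case by (simp add: wfam_def)
  next
    case (insert i0 F)
    then obtain e f d where w: "wfam A F e f d" by blast
    define V where "V = {z. \<forall>i\<in>F. om z (e i) = 0 \<and> om z (f i) = 0}"
    obtain z0 where z0: "z0 \<noteq> 0" "\<forall>i\<in>F. om z0 (e i) = 0 \<and> om z0 (f i) = 0"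
      using V_nonzero[OF insert(2)] by blast
    show ?case
    proof (cases "\<exists>x\<in>V. x \<noteq> 0 \<and> A *v x = 0")
      case True
      then obtain x where x: "x \<in> V" "x \<noteq> 0" "A *v x = 0" by blast
      obtain y where y: "\<forall>i\<in>F. om y (e i) = 0 \<and> om y (f i) = 0" "om x y = 1" "A *v y = 0"
        using kernel_case[OF w A K _ x(2) x(3)] x(1) by (auto simp: V_def)
      have "wfam A (insert i0 F) (e(i0 := x)) (f(i0 := y)) (d(i0 := 0))"
        by (rule wfam_insert[OF w insert(2)]) (use x y in \<open>auto simp: V_def\<close>)
      then show ?thesis by blast
    next
      case False
      then have pos: "\<forall>x\<in>V. x \<noteq> 0 \<longrightarrow> A *v x \<noteq> 0" by blast
      obtain x y c where xyc: "x \<in> V" "y \<in> V" "om x y = 1" "0 \<le> c"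
          "A *v x = c *\<^sub>R (Jmat *v y)" "A *v y = - c *\<^sub>R (Jmat *v x)"
        using pos_case[OF w A V_def _ z0(1) pos] z0(2) by (auto simp: V_def)
      have "wfam A (insert i0 F) (e(i0 := x)) (f(i0 := y)) (d(i0 := c))"
        by (rule wfam_insert[OF w insert(2)]) (use xyc in \<open>auto simp: V_def\<close>)
      then show ?thesis by blast
    qed
  qed
qed

lemma congr_entry:
  "(transpose M ** X ** M) $ p $ q = (\<chi> r. M$r$p) \<bullet> (X *v (\<chi> r. M$r$q))"
proof -
  have "(transpose M ** X ** M) $ p $ q = (\<Sum>s\<in>UNIV. \<Sum>r\<in>UNIV. M$r$p * X$r$s * M$s$q)"
    by (simp add: matrix_matrix_mult_def transpose_def sum_distrib_right)
  also have "\<dots> = (\<Sum>r\<in>UNIV. \<Sum>s\<in>UNIV. M$r$p * X$r$s * M$s$q)" by (rule sum.swap)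
  also have "\<dots> = (\<chi> r. M$r$p) \<bullet> (X *v (\<chi> r. M$r$q))"
    by (simp add: matrix_vector_mult_def inner_vec_def sum_distrib_left mult.assoc)
  finally show ?thesis .
qed

lemma vec_sum_eq': "(x::'a^('n::finite + 'n)) = y \<longleftrightarrow> (\<forall>i. x $ Inl i = y $ Inl i \<and> x $ Inr i = y $ Inr i)"
  by (metis sumE vec_eq_iff)

lemma mat_sum_eq: "(X::('n::finite) smat) = Y \<longleftrightarrow> (\<forall>i j. X$Inl i$Inl j = Y$Inl i$Inl j \<and> X$Inl i$Inr j = Y$Inl i$Inr j
   \<and> X$Inr i$Inl j = Y$Inr i$Inl j \<and> X$Inr i$Inr j = Y$Inr i$Inr j)"
  unfolding vec_sum_eq'[of X Y] vec_sum_eq by blast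

lemma williamson:
  fixes A :: "('n::finite) smat"
  assumes A: "sym_psd A" and K: "symplectic_subspace (kernel A)"
  shows "\<exists>M d. symplectic M \<and> (\<forall>i. 0 \<le> d i) \<and> transpose M ** A ** M = diag_dsum d"
proof -
  obtain e f d where w: "wfam A UNIV e f d" using wfam_exists[OF A K] by blast
  have s: "transpose A = A" using A by (simp add: sym_psd_def)
  define M :: "'n smat" where "M = (\<chi> r c. case c of Inl i \<Rightarrow> e i $ r | Inr i \<Rightarrow> f i $ r)"
  have cl: "(\<chi> r. M$r$Inl i) = e i" "(\<chi> r. M$r$Inr i) = f i" for i
    by (simp_all add: M_def vec_eq_iff)
  have om1: "om (e i) (f j) = (if i = j then 1 else 0)" "om (e i) (e j) = 0" "om (f i) (f j) = 0"
    and ev: "0 \<le> d i" "A *v e i = d i *\<^sub>R (Jmat *v f i)" "A *v f i = - d i *\<^sub>R (Jmat *v e i)" for i j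
    using w by (auto simp: wfam_def)
  have om2: "om (f i) (e j) = (if i = j then -1 else 0)" for i j
    using om_antisym[of "f i" "e j"] om1(1)[of j i] by auto
  have "transpose M ** Jmat ** M = Jmat"
    unfolding mat_sum_eq congr_entry cl by (simp add: om_def[symmetric] om1 om2)
  moreover have "transpose M ** A ** M = diag_dsum d"
    unfolding mat_sum_eq congr_entry cl
    by (simp add: ev om_def[symmetric] om1 om2)
  ultimately show ?thesis using ev(1) unfolding symplectic_def by blast
qed

lemma seq_ineq:
  fixes f g :: "nat \<Rightarrow> real"
  shows "(\<forall>j<n. 0 \<le> g j) \<Longrightarrow> (\<forall>i j. i \<le> j \<longrightarrow> j < n \<longrightarrow> f i \<le> f j) \<Longrightarrow> (\<forall>j<n. 0 \<le> f j) \<Longrightarrow>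
    (\<forall>t\<le>n. real k - real t \<le> (\<Sum>j\<in>{t..<n}. g j)) \<Longrightarrow> (\<Sum>j<k. f j) \<le> (\<Sum>j<n. f j * g j)"
proof (induction n arbitrary: f g k)
  case 0
  then have "k = 0" using 0(4) by auto
  then show ?case by simp
next
  case (Suc n)
  show ?case
  proof (cases k)
    case 0
    have "0 \<le> (\<Sum>j<Suc n. f j * g j)"
      by (rule sum_nonneg) (use Suc.prems(1,3) in auto)
    then show ?thesis using 0 by simp
  next
    case (Suc k')
    define f' where "f' j = f (Suc j) - f 0" for j
    define g' where "g' j = g (Suc j)" for j
    have IH: "(\<Sum>j<k'. f' j) \<le> (\<Sum>j<n. f' j * g' j)"
    proof (rule Suc.IH)
      show "\<forall>j<n. 0 \<le> g' j" using Suc.prems(1) by (auto simp: g'_def)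
      show "\<forall>i j. i \<le> j \<longrightarrow> j < n \<longrightarrow> f' i \<le> f' j" using Suc.prems(2) by (auto simp: f'_def)
      show "\<forall>j<n. 0 \<le> f' j" using Suc.prems(2) by (auto simp: f'_def)
      show "\<forall>t\<le>n. real k' - real t \<le> (\<Sum>j\<in>{t..<n}. g' j)"
      proof (intro allI impI)
        fix t assume t: "t \<le> n"
        have "(\<Sum>j\<in>{t..<n}. g' j) = (\<Sum>j\<in>{Suc t..<Suc n}. g j)"
          unfolding g'_def by (rule sum.shift_bounds_Suc_ivl[symmetric])
        moreover have "real k - real (Suc t) \<le> (\<Sum>j\<in>{Suc t..<Suc n}. g j)" using Suc.prems(4) t by auto
        ultimately show "real k' - real t \<le> (\<Sum>j\<in>{t..<n}. g' j)" using \<open>k = Suc k'\<close> by simp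
      qed
    qed
    have L: "(\<Sum>j<k. f j) = real k * f 0 + (\<Sum>j<k'. f' j)"
      unfolding \<open>k = Suc k'\<close> f'_def sum.lessThan_Suc_shift by (simp add: sum_subtractf algebra_simps)
    have R: "(\<Sum>j<Suc n. f j * g j) = f 0 * (\<Sum>j<Suc n. g j) + (\<Sum>j<n. f' j * g' j)"
      unfolding f'_def g'_def sum.lessThan_Suc_shift
      by (simp add: sum_distrib_left algebra_simps sum.distrib sum_subtractf)
    have "real k \<le> (\<Sum>j<Suc n. g j)" using Suc.prems(4)[rule_format, of 0] by (simp add: atLeast0LessThan)
    moreover have "0 \<le> f 0" using Suc.prems(3) by simp
    ultimately have "real k * f 0 \<le> f 0 * (\<Sum>j<Suc n. g j)"
      by (metis mult.commute mult_left_mono)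
    then show ?thesis unfolding L R using IH by linarith
  qed
qed

lemma enum_sorted:
  fixes d :: "'n::finite \<Rightarrow> real"
  assumes "sorted ds" "mset ds = image_mset d (mset_set (UNIV :: 'n set))"
  shows "\<exists>ys. distinct ys \<and> set ys = UNIV \<and> ds = map d ys"
proof -
  obtain xs :: "'n list" where xs: "set xs = UNIV" "distinct xs" using finite_distinct_list[of "UNIV :: 'n set"] by auto
  define ys where "ys = sort_key d xs"
  have ys: "distinct ys" "set ys = UNIV" "sorted (map d ys)" using xs by (auto simp: ys_def)
  have "mset (map d ys) = image_mset d (mset_set (UNIV :: 'n set))"
    using ys by (simp flip: mset_set_set[OF ys(1)])
  then have "sort ds = map d ys" using assms ys(3) by (metis properties_for_sort)
  then have "ds = map d ys" using assms(1) by (simp add: sorted_sort_id)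
  then show ?thesis using ys by blast
qed

lemma sorted_exists:
  fixes d :: "'n::finite \<Rightarrow> real"
  shows "\<exists>ds. sorted ds \<and> mset ds = image_mset d (mset_set (UNIV :: 'n set))"
proof -
  obtain xs :: "'n list" where xs: "set xs = UNIV" "distinct xs" using finite_distinct_list[of "UNIV :: 'n set"] by auto
  show ?thesis
    by (rule exI[of _ "sort (map d xs)"]) (simp flip: xs(1) add: mset_set_set[OF xs(2)])
qed

lemma weight_bound:
  fixes d w :: "'n::finite \<Rightarrow> real"
  assumes ds: "sorted ds" "mset ds = image_mset d (mset_set (UNIV :: 'n set))"
    and d0: "\<forall>p. 0 \<le> d p" and w0: "\<forall>p. 0 \<le> w p"
    and cond: "\<forall>R. real k - real (card R) \<le> (\<Sum>p\<in>- R. w p)"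
  shows "sum_list (take k ds) \<le> (\<Sum>p\<in>UNIV. d p * w p)"
proof -
  obtain ys where ys: "distinct ys" "set ys = UNIV" "ds = map d ys" using enum_sorted[OF ds] by blast
  define n where "n = length ys"
  have bij: "bij_betw ((!) ys) {..<n} UNIV" using ys by (intro bij_betw_nth) (auto simp: n_def)
  have "real k - real (card (UNIV::'n set)) \<le> 0" using cond[rule_format, of UNIV] by simp
  moreover have cn: "card (UNIV :: 'n set) = n" using ys distinct_card by (fastforce simp: n_def)
  ultimately have kn: "k \<le> n" by simp
  have "sum_list (take k ds) = (\<Sum>j = 0..<length (take k ds). take k ds ! j)" by (rule sum_list_sum_nth)
  also have "\<dots> = (\<Sum>j<k. d (ys ! j))" using kn by (simp add: ys(3) n_def atLeast0LessThan)
  finally have lhs: "sum_list (take k ds) = (\<Sum>j<k. d (ys ! j))" .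
  have rhs: "(\<Sum>p\<in>UNIV. d p * w p) = (\<Sum>j<n. d (ys!j) * w (ys!j))"
    using sum.reindex_bij_betw[OF bij, of "\<lambda>p. d p * w p"] by simp
  have "(\<Sum>j<k. d (ys ! j)) \<le> (\<Sum>j<n. d (ys!j) * w (ys!j))"
  proof (rule seq_ineq)
    show "\<forall>j<n. 0 \<le> w (ys ! j)" using w0 by simp
    show "\<forall>j<n. 0 \<le> d (ys ! j)" using d0 by simp
    show "\<forall>i j. i \<le> j \<longrightarrow> j < n \<longrightarrow> d (ys ! i) \<le> d (ys ! j)"
      using ds(1) ys(3) by (auto simp: n_def sorted_iff_nth_mono)
    show "\<forall>t\<le>n. real k - real t \<le> (\<Sum>j = t..<n. w (ys ! j))"
    proof (intro allI impI)
      fix t assume t: "t \<le> n"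
      define R where "R = (!) ys ` {..<t}"
      have inj: "inj_on ((!) ys) {..<n}" using bij by (simp add: bij_betw_def)
      have cR: "card R = t" unfolding R_def using t by (subst card_image) (auto intro: inj_on_subset[OF inj])
      have "- R = (!) ys ` {t..<n}"
      proof -
        have "UNIV = (!) ys ` {..<n}" using bij by (simp add: bij_betw_def)
        also have "{..<n} = {..<t} \<union> {t..<n}" using t by auto
        finally have U: "UNIV = R \<union> (!) ys ` {t..<n}" by (simp add: R_def image_Un)
        have "R \<inter> (!) ys ` {t..<n} = {}"
        proof (rule ccontr)
          assume "R \<inter> (!) ys ` {t..<n} \<noteq> {}"
          then obtain a b where ab: "a < t" "t \<le> b" "b < n" "ys ! a = ys ! b" unfolding R_def by auto
          then have "a = b" using inj t unfolding inj_on_def by (metis lessThan_iff order.strict_trans2)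
          then show False using ab by simp
        qed
        then show ?thesis using U by blast
      qed
      moreover have "inj_on ((!) ys) {t..<n}" by (rule inj_on_subset[OF inj]) auto
      ultimately have "(\<Sum>p\<in>- R. w p) = (\<Sum>j = t..<n. w (ys ! j))"
        by (simp add: sum.reindex)
      then show "real k - real t \<le> (\<Sum>j = t..<n. w (ys ! j))" using cond cR by metis
    qed
  qed
  then show ?thesis using lhs rhs by simp
qed

lemma prefix_attained:
  fixes d :: "'n::finite \<Rightarrow> real"
  assumes ds: "sorted ds" "mset ds = image_mset d (mset_set (UNIV :: 'n set))"
    and k: "k \<le> CARD('n)"
  shows "\<exists>S. card S = k \<and> sum_list (take k ds) = (\<Sum>p\<in>S. d p)"
proof -
  obtain ys where ys: "distinct ys" "set ys = UNIV" "ds = map d ys" using enum_sorted[OF ds] by blast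
  have "length ys = CARD('n)" using ys distinct_card by fastforce
  then have "card (set (take k ys)) = k" using ys(1) k by (simp add: distinct_card)
  moreover have "sum_list (take k ds) = (\<Sum>p\<in>set (take k ys). d p)"
    using ys by (simp add: take_map sum_list_distinct_conv_sum_set)
  ultimately show ?thesis by blast
qed

lemma length_ds:
  fixes d :: "'n::finite \<Rightarrow> real"
  assumes "mset ds = image_mset d (mset_set (UNIV :: 'n set))"
  shows "length ds = CARD('n)"
  using arg_cong[OF assms, of size] by simp

lemma orth_subspace: "subspace {c. \<forall>g\<in>G. g \<bullet> c = 0}"
  unfolding subspace_def by (auto simp: inner_add_right)

lemma dim_svec: "dim (UNIV :: ('n::finite) svec set) = 2 * CARD('n)"
  by (simp add: card_UNIV_sum)

lemma dim_orth:
  fixes G :: "('n::finite) svec set"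
  assumes "finite G"
  shows "2 * CARD('n) \<le> dim {c. \<forall>g\<in>G. g \<bullet> c = 0} + card G"
proof -
  have "dim {y \<in> UNIV. \<forall>x\<in>span G. orthogonal x y} + dim (span G) = dim (UNIV :: 'n svec set)"
    by (rule dim_subspace_orthogonal_to_vectors) auto
  moreover have "dim (span G) \<le> card G" using assms by (simp add: dim_span dim_le_card')
  moreover have "dim {y \<in> UNIV. \<forall>x\<in>span G. orthogonal x y} \<le> dim {c. \<forall>g\<in>G. g \<bullet> c = 0}"
    by (rule dim_subset) (auto simp: orthogonal_def intro: span_base)
  ultimately show ?thesis by (simp add: dim_svec)
qed

lemma dim_inter_ge:
  fixes U W :: "('n::finite) svec set"
  assumes "subspace U" "subspace W"
  shows "dim U + dim W \<le> dim (U \<inter> W) + 2 * CARD('n)"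
proof -
  have "dim {x + y |x y. x \<in> U \<and> y \<in> W} + dim (U \<inter> W) = dim U + dim W"
    by (rule dim_sums_Int[OF assms])
  moreover have "dim {x + y |x y. x \<in> U \<and> y \<in> W} \<le> 2 * CARD('n)"
  proof -
    have "dim {x + y |x y. x \<in> U \<and> y \<in> W} \<le> dim (UNIV :: 'n svec set)" by (rule dim_subset) simp
    then show ?thesis by (simp add: dim_svec)
  qed
  ultimately show ?thesis by linarith
qed

lemma greedy:
  fixes V :: "('n::finite) svec set"
  assumes V: "subspace V"
  shows "2 * m \<le> dim V \<Longrightarrow> \<exists>c. \<forall>a<m. c a \<in> V \<and> c a \<bullet> c a = 1 \<and>
            (\<forall>b<m. b \<noteq> a \<longrightarrow> c a \<bullet> c b = 0 \<and> c a \<bullet> (Jmat *v c b) = 0)"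
proof (induction m)
  case 0 then show ?case by simp
next
  case (Suc m)
  then obtain c where c: "\<forall>a<m. c a \<in> V \<and> c a \<bullet> c a = 1 \<and>
            (\<forall>b<m. b \<noteq> a \<longrightarrow> c a \<bullet> c b = 0 \<and> c a \<bullet> (Jmat *v c b) = 0)" by auto
  define G where "G = c ` {..<m} \<union> (\<lambda>v. Jmat *v v) ` c ` {..<m}"
  have fG: "finite G" by (simp add: G_def)
  have cG: "card G \<le> 2 * m"
  proof -
    have "card G \<le> card (c ` {..<m}) + card ((\<lambda>v. Jmat *v v) ` c ` {..<m})" unfolding G_def by (rule card_Un_le)
    also have "\<dots> \<le> m + m"
    proof -
      have 1: "card (c ` {..<m}) \<le> m" using card_image_le[of "{..<m}" c] by simp
      have "card ((\<lambda>v. Jmat *v v) ` c ` {..<m}) \<le> card (c ` {..<m})" by (rule card_image_le) simp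
      then show ?thesis using 1 by linarith
    qed
    finally show ?thesis by simp
  qed
  define Ob where "Ob = {z. \<forall>g\<in>G. g \<bullet> z = 0}"
  have "2 * CARD('n) \<le> dim Ob + card G" unfolding Ob_def by (rule dim_orth[OF fG])
  moreover have "dim V + dim Ob \<le> dim (V \<inter> Ob) + 2 * CARD('n)"
    by (rule dim_inter_ge[OF V]) (simp add: Ob_def orth_subspace)
  moreover have "2 * m + 2 \<le> dim V" using Suc.prems by simp
  ultimately have "dim (V \<inter> Ob) \<noteq> 0" using cG by linarith
  then have "\<not> (V \<inter> Ob \<subseteq> {0})" by (metis dim_eq_0)
  then obtain z where z: "z \<in> V" "z \<in> Ob" "z \<noteq> 0" by blast
  define z1 where "z1 = (1 / norm z) *\<^sub>R z"
  have z1V: "z1 \<in> V" using z V by (simp add: z1_def subspace_scale)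
  have z1n: "z1 \<bullet> z1 = 1" using z(3) by (simp add: z1_def inner_commute power2_norm_eq_inner[symmetric] power2_eq_square)
  have z1o: "c a \<bullet> z1 = 0" "(Jmat *v c a) \<bullet> z1 = 0" if "a < m" for a
    using z(2) that by (auto simp: Ob_def G_def z1_def)
  define c' where "c' = c(m := z1)"
  have "\<forall>a<Suc m. c' a \<in> V \<and> c' a \<bullet> c' a = 1 \<and>
            (\<forall>b<Suc m. b \<noteq> a \<longrightarrow> c' a \<bullet> c' b = 0 \<and> c' a \<bullet> (Jmat *v c' b) = 0)"
  proof (intro allI impI conjI)
    fix a assume a: "a < Suc m"
    show "c' a \<in> V" "c' a \<bullet> c' a = 1" using a c z1V z1n by (cases "a = m"; simp add: c'_def)+
    fix b assume b: "b < Suc m" "b \<noteq> a"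
    show "c' a \<bullet> c' b = 0"
    proof (cases "a = m")
      case True
      then have "b < m" using b by simp
      then show ?thesis using True z1o(1)[of b] by (simp add: c'_def inner_commute)
    next
      case False
      then have am: "a < m" using a by simp
      show ?thesis
      proof (cases "b = m")
        case True
        then show ?thesis using am z1o(1)[OF am] False by (simp add: c'_def)
      next
        case bF: False
        then have "b < m" using b by simp
        then show ?thesis using am b c False bF by (simp add: c'_def)
      qed
    qed
    show "c' a \<bullet> (Jmat *v c' b) = 0"
    proof (cases "a = m")
      case True
      then have "b < m" using b by auto
      then show ?thesis using True z1o(2)[of b] by (simp add: c'_def inner_commute)
    next
      case False
      then have am: "a < m" using a by auto
      show ?thesis
      proof (cases "b = m")
        case True
        have "c a \<bullet> (Jmat *v z1) = - ((Jmat *v c a) \<bullet> z1)" by (simp add: J_inner_left)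
        then show ?thesis using True False am z1o(2)[OF am] by (simp add: c'_def)
      next
        case False
        then have bm: "b < m" using b by simp
        then show ?thesis using am b c \<open>a \<noteq> m\<close> False by (simp add: c'_def)
      qed
    qed
  qed
  then show ?case by blast
qed

lemma bessel:
  fixes r :: "'a::real_inner"
  assumes on: "\<forall>l<(N::nat). \<forall>l'<N. b l \<bullet> b l' = (if l = l' then 1 else 0)"
  shows "(\<Sum>l<N. (r \<bullet> b l)^2) \<le> r \<bullet> r"
proof -
  define s where "s = (\<Sum>l<N. (r \<bullet> b l) *\<^sub>R b l)"
  have rs: "r \<bullet> s = (\<Sum>l<N. (r \<bullet> b l)^2)"
    by (simp add: s_def inner_sum_right power2_eq_square)
  have ss: "s \<bullet> s = (\<Sum>l<N. (r \<bullet> b l)^2)"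
  proof -
    have "s \<bullet> s = (\<Sum>l<N. (r \<bullet> b l) * (b l \<bullet> s))" by (simp add: s_def inner_sum_left)
    also have "\<dots> = (\<Sum>l<N. (r \<bullet> b l) * (r \<bullet> b l))"
    proof (rule sum.cong[OF refl])
      fix l assume l: "l \<in> {..<N}"
      have "b l \<bullet> s = (\<Sum>l'<N. (r \<bullet> b l') * (if l = l' then 1 else 0))"
        unfolding s_def inner_sum_right using on l by (intro sum.cong) auto
      also have "\<dots> = (\<Sum>l'<N. if l = l' then r \<bullet> b l else 0)" by (intro sum.cong) auto
      also have "\<dots> = r \<bullet> b l" by (subst sum.delta') (use l in auto)
      finally show "(r \<bullet> b l) * (b l \<bullet> s) = (r \<bullet> b l) * (r \<bullet> b l)" by simp
    qed
    finally show ?thesis by (simp add: power2_eq_square)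
  qed
  have "0 \<le> (r - s) \<bullet> (r - s)" by simp
  also have "\<dots> = r \<bullet> r - 2 * (r \<bullet> s) + s \<bullet> s"
  proof -
    have "s \<bullet> r = r \<bullet> s" by (rule inner_commute)
    then show ?thesis by (simp add: inner_diff_left inner_diff_right)
  qed
  finally show ?thesis using rs ss by simp
qed

lemma sum_two: "(\<Sum>l<a+b. F l) = (\<Sum>l<a. F l) + (\<Sum>l<b. F (a + (l::nat)))"
  by (induct b) (auto simp: add.assoc)

definition Xc :: "'n set \<Rightarrow> ('n \<Rightarrow> ('n::finite) svec) \<Rightarrow> ('n \<Rightarrow> 'n svec) \<Rightarrow> 'n svec \<Rightarrow> 'n svec" where
  "Xc S x y c = (\<Sum>i\<in>S. c$Inl i *\<^sub>R x i + c$Inr i *\<^sub>R y i)"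

definition rowv :: "'n set \<Rightarrow> ('n \<Rightarrow> ('n::finite) svec) \<Rightarrow> ('n \<Rightarrow> 'n svec) \<Rightarrow> ('n + 'n) \<Rightarrow> 'n svec" where
  "rowv S x y r = (\<chi> q. case q of Inl i \<Rightarrow> (if i \<in> S then x i $ r else 0) | Inr i \<Rightarrow> (if i \<in> S then y i $ r else 0))"

definition CS :: "('n::finite) set \<Rightarrow> 'n svec set" where
  "CS S = {c. \<forall>i. i \<notin> S \<longrightarrow> c$Inl i = 0 \<and> c$Inr i = 0}"

definition son :: "'n set \<Rightarrow> ('n \<Rightarrow> ('n::finite) svec) \<Rightarrow> ('n \<Rightarrow> 'n svec) \<Rightarrow> bool" where
  "son S x y \<longleftrightarrow> (\<forall>i\<in>S. \<forall>j\<in>S. om (x i) (y j) = (if i = j then 1 else 0) \<and> om (x i) (x j) = 0 \<and> om (y i) (y j) = 0)"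

lemma sum_if_S: "(\<Sum>i\<in>(UNIV::('a::finite) set). if i \<in> S then g i else 0) = (\<Sum>i\<in>S. g i)"
  using sum.inter_restrict[of UNIV g S] by simp

lemma Xc_nth: "Xc S x y c $ r = rowv S x y r \<bullet> c"
proof -
  have "Xc S x y c $ r = (\<Sum>i\<in>S. c$Inl i * x i $ r + c$Inr i * y i $ r)"
    by (simp add: Xc_def)
  also have "\<dots> = (\<Sum>i\<in>UNIV. if i \<in> S then c$Inl i * x i $ r + c$Inr i * y i $ r else 0)"
    by (simp add: sum_if_S)
  also have "\<dots> = rowv S x y r \<bullet> c"
    unfolding inner_sum_expand by (intro sum.cong) (auto simp: rowv_def)
  finally show ?thesis .
qed

lemma om_x_X:
  assumes "son S x y" "i \<in> S"
  shows "om (x i) (Xc S x y c) = c$Inr i" "om (y i) (Xc S x y c) = - c$Inl i"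
proof -
  have "om (x i) (Xc S x y c) = (\<Sum>j\<in>S. c$Inl j * om (x i) (x j) + c$Inr j * om (x i) (y j))"
    by (simp add: Xc_def om_sum_right om_add_right om_scale_right)
  also have "\<dots> = (\<Sum>j\<in>S. if i = j then c$Inr j else 0)"
    using assms by (intro sum.cong) (auto simp: son_def)
  also have "\<dots> = c$Inr i" using assms(2) by simp
  finally show "om (x i) (Xc S x y c) = c$Inr i" .
  have "om (y i) (Xc S x y c) = (\<Sum>j\<in>S. c$Inl j * om (y i) (x j) + c$Inr j * om (y i) (y j))"
    by (simp add: Xc_def om_sum_right om_add_right om_scale_right)
  also have "\<dots> = (\<Sum>j\<in>S. if i = j then - c$Inl j else 0)"
  proof (intro sum.cong refl)
    fix j assume j: "j \<in> S"
    have "om (y i) (x j) = - om (x j) (y i)" by (rule om_antisym)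
    then show "c$Inl j * om (y i) (x j) + c$Inr j * om (y i) (y j) = (if i = j then - c$Inl j else 0)"
      using assms j by (auto simp: son_def)
  qed
  also have "\<dots> = - c$Inl i" using assms(2) by simp
  finally show "om (y i) (Xc S x y c) = - c$Inl i" .
qed

lemma om_XX:
  assumes "son S x y" "c \<in> CS S"
  shows "om (Xc S x y c) (Xc S x y c') = om c c'"
proof -
  have "om (Xc S x y c) (Xc S x y c') = (\<Sum>i\<in>S. om (c$Inl i *\<^sub>R x i + c$Inr i *\<^sub>R y i) (Xc S x y c'))"
    unfolding Xc_def[of S x y c] by (rule om_sum_left) simp
  also have "\<dots> = (\<Sum>i\<in>S. c$Inl i * c'$Inr i - c$Inr i * c'$Inl i)"
    by (intro sum.cong refl) (simp add: om_add_left om_scale_left om_x_X[OF assms(1)])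
  also have "\<dots> = (\<Sum>i\<in>UNIV. c$Inl i * c'$Inr i - c$Inr i * c'$Inl i)"
    by (rule sum.mono_neutral_left) (use assms(2) in \<open>auto simp: CS_def\<close>)
  finally show ?thesis by (simp add: om_expand)
qed

definition cs :: "('n::finite) svec \<Rightarrow> 'n svec" where "cs c = - (Jmat *v c)"

lemma cs_CS: "c \<in> CS S \<Longrightarrow> cs c \<in> CS S"
  by (simp add: CS_def cs_def)

lemma om_cs: "om c (cs c) = c \<bullet> c"
  by (simp add: om_def cs_def)

lemma per_c:
  assumes s: "son S x y" and c: "c \<in> CS S"
    and z: "\<forall>p\<in>R. rowv S x y (Inl p) \<bullet> c = 0 \<and> rowv S x y (Inr p) \<bullet> c = 0"
  shows "2 * (c \<bullet> c) \<le> (\<Sum>p\<in>-R. (rowv S x y (Inl p) \<bullet> c)^2 + (rowv S x y (Inr p) \<bullet> c)^2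
            + (rowv S x y (Inl p) \<bullet> cs c)^2 + (rowv S x y (Inr p) \<bullet> cs c)^2)"
proof -
  let ?u = "\<lambda>r. rowv S x y r \<bullet> c" and ?v = "\<lambda>r. rowv S x y r \<bullet> cs c"
  have "c \<bullet> c = om (Xc S x y c) (Xc S x y (cs c))" by (metis om_XX[OF s c] om_cs)
  also have "\<dots> = (\<Sum>p\<in>UNIV. ?u (Inl p) * ?v (Inr p) - ?u (Inr p) * ?v (Inl p))"
    by (simp add: om_expand Xc_nth)
  also have "\<dots> = (\<Sum>p\<in>-R. ?u (Inl p) * ?v (Inr p) - ?u (Inr p) * ?v (Inl p))"
    by (rule sum.mono_neutral_right) (use z in auto)
  finally have 1: "c \<bullet> c = (\<Sum>p\<in>-R. ?u (Inl p) * ?v (Inr p) - ?u (Inr p) * ?v (Inl p))" .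
  have "2 * (c \<bullet> c) = (\<Sum>p\<in>-R. 2 * (?u (Inl p) * ?v (Inr p)) - 2 * (?u (Inr p) * ?v (Inl p)))"
    unfolding 1 sum_distrib_left by (simp add: algebra_simps)
  also have "\<dots> \<le> (\<Sum>p\<in>-R. (?u (Inl p))^2 + (?u (Inr p))^2 + (?v (Inl p))^2 + (?v (Inr p))^2)"
  proof (rule sum_mono)
    fix p
    have "0 \<le> (?u (Inl p) - ?v (Inr p))^2" "0 \<le> (?u (Inr p) + ?v (Inl p))^2" by simp_all
    then show "2 * (?u (Inl p) * ?v (Inr p)) - 2 * (?u (Inr p) * ?v (Inl p))
        \<le> (?u (Inl p))^2 + (?u (Inr p))^2 + (?v (Inl p))^2 + (?v (Inr p))^2"
      by (simp add: power2_eq_square algebra_simps)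
  qed
  finally show ?thesis .
qed

lemma card_two_images: "card (f ` A \<union> g ` (A::('n::finite) set)) \<le> 2 * card A"
proof -
  have "card (f ` A \<union> g ` A) \<le> card (f ` A) + card (g ` A)" by (rule card_Un_le)
  also have "\<dots> \<le> card A + card A" by (intro add_mono card_image_le) auto
  finally show ?thesis by simp
qed

lemma CS_orth: "CS S = {c. \<forall>g\<in>(\<lambda>i. axis (Inl i) 1) ` (-S) \<union> (\<lambda>i. axis (Inr i) 1) ` (-S). g \<bullet> c = (0::real)}"
proof (intro set_eqI iffI)
  fix c :: "('a::finite) svec"
  assume "c \<in> CS S"
  then show "c \<in> {c. \<forall>g\<in>(\<lambda>i. axis (Inl i) 1) ` (-S) \<union> (\<lambda>i. axis (Inr i) 1) ` (-S). g \<bullet> c = (0::real)}"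
    by (auto simp: CS_def inner_axis')
next
  fix c :: "('a::finite) svec"
  assume h: "c \<in> {c. \<forall>g\<in>(\<lambda>i. axis (Inl i) 1) ` (-S) \<union> (\<lambda>i. axis (Inr i) 1) ` (-S). g \<bullet> c = (0::real)}"
  show "c \<in> CS S" unfolding CS_def
  proof (intro CollectI allI impI)
    fix i assume i: "i \<notin> S"
    have "axis (Inl i) 1 \<bullet> c = 0" "axis (Inr i) 1 \<bullet> c = 0" using h i by auto
    then show "c $ Inl i = 0 \<and> c $ Inr i = 0" by (simp add: inner_axis')
  qed
qed

lemma key_weight:
  fixes S R :: "('n::finite) set"
  assumes s: "son S x y"
  shows "2 * (real (card S) - real (card R)) \<le>
    (\<Sum>p\<in>-R. rowv S x y (Inl p) \<bullet> rowv S x y (Inl p) + rowv S x y (Inr p) \<bullet> rowv S x y (Inr p))"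
proof (cases "card S \<le> card R")
  case True
  have "0 \<le> (\<Sum>p\<in>-R. rowv S x y (Inl p) \<bullet> rowv S x y (Inl p) + rowv S x y (Inr p) \<bullet> rowv S x y (Inr p))"
    by (intro sum_nonneg add_nonneg_nonneg) auto
  then show ?thesis using True by simp
next
  case False
  define m where "m = card S - card R"
  let ?row = "rowv S x y"
  define GR where "GR = (\<lambda>p. ?row (Inl p)) ` R \<union> (\<lambda>p. ?row (Inr p)) ` R"
  define W where "W = {c. \<forall>g\<in>GR. g \<bullet> c = 0}"
  define V where "V = CS S \<inter> W"
  have n1: "2 * CARD('n) \<le> dim (CS S) + 2 * card (-S)"
  proof -
    have "2 * CARD('n) \<le> dim (CS S) + card ((\<lambda>i. axis (Inl i) 1) ` (-S) \<union> (\<lambda>i. axis (Inr i) (1::real)) ` (-S))"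
      unfolding CS_orth by (rule dim_orth) simp
    then show ?thesis using card_two_images[of "\<lambda>i. axis (Inl i) (1::real)" "-S" "\<lambda>i. axis (Inr i) 1"] by linarith
  qed
  have cS: "card (-S) + card S = CARD('n)"
  proof -
    have "card (-S) = card (UNIV :: 'n set) - card S"
      by (metis Compl_eq_Diff_UNIV card_Diff_subset top_greatest finite)
    then show ?thesis using card_mono[of UNIV S] by simp
  qed
  have n2: "2 * CARD('n) \<le> dim W + 2 * card R"
  proof -
    have "2 * CARD('n) \<le> dim W + card GR" unfolding W_def by (rule dim_orth) (simp add: GR_def)
    moreover have "card GR \<le> 2 * card R" unfolding GR_def by (rule card_two_images)
    ultimately show ?thesis by linarith
  qed
  have sCS: "subspace (CS S)" unfolding CS_orth by (rule orth_subspace)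
  have sW: "subspace W" unfolding W_def by (rule orth_subspace)
  have "dim (CS S) + dim W \<le> dim V + 2 * CARD('n)" unfolding V_def by (rule dim_inter_ge[OF sCS sW])
  then have dV: "2 * m \<le> dim V" using n1 n2 cS False unfolding m_def by linarith
  have sV: "subspace V" unfolding V_def by (rule subspace_inter[OF sCS sW])
  obtain c where c: "\<forall>a<m. c a \<in> V \<and> c a \<bullet> c a = 1 \<and>
            (\<forall>b<m. b \<noteq> a \<longrightarrow> c a \<bullet> c b = 0 \<and> c a \<bullet> (Jmat *v c b) = 0)"
    using greedy[OF sV dV] by blast
  define b where "b l = (if l < m then c l else cs (c (l - m)))" for l
  have cJc: "c a \<bullet> (Jmat *v c a) = 0" for a by (metis om_def om_self)
  have on: "\<forall>l<m+m. \<forall>l'<m+m. b l \<bullet> b l' = (if l = l' then 1 else 0)"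
  proof (intro allI impI)
    fix l l' assume l: "l < m + m" and l': "l' < m + m"
    have cc: "c a \<bullet> c a' = (if a = a' then 1 else 0)" if "a < m" "a' < m" for a a'
      using c that by auto
    have cj: "c a \<bullet> (Jmat *v c a') = 0" if "a < m" "a' < m" for a a'
      using c that cJc by (cases "a = a'") auto
    have jc: "(Jmat *v c a) \<bullet> c a' = 0" if "a < m" "a' < m" for a a'
      using cj[OF that(2,1)] by (simp add: inner_commute)
    show "b l \<bullet> b l' = (if l = l' then 1 else 0)"
      using l l' by (auto simp: b_def cs_def cc cj jc)
  qed
  have bes: "(\<Sum>l<m+m. (r \<bullet> b l)^2) \<le> r \<bullet> r" for r :: "'n svec" by (rule bessel[OF on])
  define F where "F l = (\<Sum>p\<in>-R. (?row (Inl p) \<bullet> b l)^2 + (?row (Inr p) \<bullet> b l)^2)" for l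
  have "(\<Sum>l<m+m. F l) = (\<Sum>p\<in>-R. (\<Sum>l<m+m. (?row (Inl p) \<bullet> b l)^2) + (\<Sum>l<m+m. (?row (Inr p) \<bullet> b l)^2))"
    unfolding F_def by (subst sum.swap) (simp add: sum.distrib)
  also have "\<dots> \<le> (\<Sum>p\<in>-R. ?row (Inl p) \<bullet> ?row (Inl p) + ?row (Inr p) \<bullet> ?row (Inr p))"
    by (intro sum_mono add_mono bes)
  finally have up: "(\<Sum>l<m+m. F l) \<le> (\<Sum>p\<in>-R. ?row (Inl p) \<bullet> ?row (Inl p) + ?row (Inr p) \<bullet> ?row (Inr p))" .
  have "(\<Sum>l<m+m. F l) = (\<Sum>a<m. F a + F (m + a))" by (simp add: sum_two sum.distrib)
  also have "\<dots> \<ge> (\<Sum>a<m. 2)"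
  proof (rule sum_mono)
    fix a assume a: "a \<in> {..<m}"
    have ca: "c a \<in> CS S" "c a \<in> W" "c a \<bullet> c a = 1" using c a by (auto simp: V_def)
    have z: "\<forall>p\<in>R. ?row (Inl p) \<bullet> c a = 0 \<and> ?row (Inr p) \<bullet> c a = 0"
      using ca(2) by (auto simp: W_def GR_def)
    have "F a + F (m + a) = (\<Sum>p\<in>-R. (?row (Inl p) \<bullet> c a)^2 + (?row (Inr p) \<bullet> c a)^2
            + (?row (Inl p) \<bullet> cs (c a))^2 + (?row (Inr p) \<bullet> cs (c a))^2)"
      using a by (simp add: F_def b_def sum.distrib[symmetric] add.assoc)
    then show "2 \<le> F a + F (m + a)" using per_c[OF s ca(1) z] ca(3) by simp
  qed
  finally have "2 * real m \<le> (\<Sum>l<m+m. F l)" by simp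
  then show ?thesis using up False unfolding m_def by (simp add: of_nat_diff)
qed

lemma diag_mv [simp]:
  "(diag_dsum d *v z) $ Inl p = d p * z $ Inl p" "(diag_dsum d *v z) $ Inr p = d p * z $ Inr p"
  by (simp_all add: matrix_vector_mult_def sum_UNIV_plus if0_mult)

lemma qf_diag: "z \<bullet> (diag_dsum d *v z) = (\<Sum>p\<in>UNIV. d p * ((z $ Inl p)^2 + (z $ Inr p)^2))"
  by (simp add: inner_sum_expand power2_eq_square algebra_simps)

lemma row_sq: "rowv S x y r \<bullet> rowv S x y r = (\<Sum>i\<in>S. (x i $ r)^2 + (y i $ r)^2)"
proof -
  have "rowv S x y r \<bullet> rowv S x y r = (\<Sum>i\<in>UNIV. if i \<in> S then (x i $ r)^2 + (y i $ r)^2 else 0)"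
    unfolding inner_sum_expand by (intro sum.cong) (auto simp: rowv_def power2_eq_square)
  then show ?thesis by (simp add: sum_if_S)
qed

lemma lemma_K:
  fixes d :: "'n::finite \<Rightarrow> real"
  assumes s: "son S x y" and d0: "\<forall>p. 0 \<le> d p"
    and ds: "sorted ds" "mset ds = image_mset d (mset_set (UNIV :: 'n set))"
  shows "2 * sum_list (take (card S) ds) \<le>
     (\<Sum>i\<in>S. x i \<bullet> (diag_dsum d *v x i) + y i \<bullet> (diag_dsum d *v y i))"
proof -
  define w where "w p = rowv S x y (Inl p) \<bullet> rowv S x y (Inl p) + rowv S x y (Inr p) \<bullet> rowv S x y (Inr p)" for p
  have "(\<Sum>i\<in>S. x i \<bullet> (diag_dsum d *v x i) + y i \<bullet> (diag_dsum d *v y i)) =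
      (\<Sum>i\<in>S. \<Sum>p\<in>UNIV. d p * ((x i $ Inl p)^2 + (x i $ Inr p)^2 + (y i $ Inl p)^2 + (y i $ Inr p)^2))"
    unfolding qf_diag by (simp add: sum.distrib[symmetric] algebra_simps)
  also have "\<dots> = (\<Sum>p\<in>UNIV. d p * w p)"
    unfolding w_def row_sq by (subst sum.swap) (simp add: sum_distrib_left sum.distrib algebra_simps)
  finally have eq: "(\<Sum>i\<in>S. x i \<bullet> (diag_dsum d *v x i) + y i \<bullet> (diag_dsum d *v y i)) = (\<Sum>p\<in>UNIV. d p * w p)" .
  have "sum_list (take (card S) ds) \<le> (\<Sum>p\<in>UNIV. d p * (w p / 2))"
  proof (rule weight_bound[OF ds d0])
    show "\<forall>p. 0 \<le> w p / 2" by (simp add: w_def)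
    show "\<forall>R. real (card S) - real (card R) \<le> (\<Sum>p\<in>- R. w p / 2)"
    proof
      fix R :: "'n set"
      have k: "2 * (real (card S) - real (card R)) \<le> (\<Sum>p\<in>-R. w p)"
        using key_weight[OF s, of R] by (simp add: w_def)
      show "real (card S) - real (card R) \<le> (\<Sum>p\<in>- R. w p / 2)"
        by (subst sum_divide_distrib[symmetric]) (use k in \<open>simp add: field_simps\<close>)
    qed
  qed
  then show ?thesis unfolding eq by (simp add: sum_divide_distrib[symmetric])
qed

lemma JtJ: "transpose Jmat ** Jmat = (mat 1 :: ('n::finite) smat)"
  by (simp add: mat_sum_eq matrix_matrix_mult_def transpose_def sum_UNIV_plus mat_def if0_mult)

lemma qf_congr: "(N *v z) \<bullet> (B *v (N *v z)) = z \<bullet> ((transpose N ** B ** N) *v (z::real^'m::finite))"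
  by (metis mv_inner matrix_vector_mul_assoc)

lemma family_lower:
  fixes N B :: "('n::finite) smat"
  assumes N: "symplectic N" and NB: "transpose N ** B ** N = diag_dsum d" and d0: "\<forall>i. 0 \<le> d i"
    and ds: "sorted ds" "mset ds = image_mset d (mset_set (UNIV :: 'n set))"
    and s: "son S u v"
  shows "2 * sum_list (take (card S) ds) \<le> (\<Sum>i\<in>S. u i \<bullet> (B *v u i) + v i \<bullet> (B *v v i))"
proof -
  define Ni where "Ni = transpose Jmat ** transpose N ** Jmat"
  have "Ni ** N = transpose Jmat ** (transpose N ** Jmat ** N)"
    unfolding Ni_def by (simp add: matrix_mul_assoc)
  then have "Ni ** N = mat 1" using N unfolding symplectic_def by (simp add: JtJ)
  then have NNi: "N ** Ni = mat 1" by (simp add: matrix_left_right_inverse)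
  have bk: "N *v (Ni *v z) = z" for z by (simp add: matrix_vector_mul_assoc NNi)
  define u' where "u' i = Ni *v u i" for i
  define v' where "v' i = Ni *v v i" for i
  have omNi: "om (Ni *v a) (Ni *v b) = om a b" for a b
    using symplectic_om[OF N, of "Ni *v a" "Ni *v b"] by (simp add: bk)
  have s': "son S u' v'" using s by (simp add: son_def u'_def v'_def omNi)
  have "2 * sum_list (take (card S) ds) \<le> (\<Sum>i\<in>S. u' i \<bullet> (diag_dsum d *v u' i) + v' i \<bullet> (diag_dsum d *v v' i))"
    by (rule lemma_K[OF s' d0 ds])
  also have "\<dots> = (\<Sum>i\<in>S. u i \<bullet> (B *v u i) + v i \<bullet> (B *v v i))"
  proof (intro sum.cong refl)
    fix i
    have "u i \<bullet> (B *v u i) = u' i \<bullet> (diag_dsum d *v u' i)"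
      using qf_congr[of N "u' i" B] by (simp add: u'_def bk NB)
    moreover have "v i \<bullet> (B *v v i) = v' i \<bullet> (diag_dsum d *v v' i)"
      using qf_congr[of N "v' i" B] by (simp add: v'_def bk NB)
    ultimately show "u' i \<bullet> (diag_dsum d *v u' i) + v' i \<bullet> (diag_dsum d *v v' i) = u i \<bullet> (B *v u i) + v i \<bullet> (B *v v i)"
      by simp
  qed
  finally show ?thesis .
qed

lemma columns_family:
  fixes N A :: "('n::finite) smat"
  assumes N: "symplectic N" and NA: "transpose N ** A ** N = diag_dsum d"
  shows "son S (\<lambda>i. \<chi> r. N$r$Inl i) (\<lambda>i. \<chi> r. N$r$Inr i)"
    "(\<chi> r. N$r$Inl i) \<bullet> (A *v (\<chi> r. N$r$Inl i)) = d i"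
    "(\<chi> r. N$r$Inr i) \<bullet> (A *v (\<chi> r. N$r$Inr i)) = d i"
proof -
  have J: "transpose N ** Jmat ** N = Jmat" using N by (simp add: symplectic_def)
  show "son S (\<lambda>i. \<chi> r. N$r$Inl i) (\<lambda>i. \<chi> r. N$r$Inr i)"
    unfolding son_def om_def using arg_cong[OF J, of "\<lambda>X. X $ _ $ _"] by (simp add: congr_entry)
  show "(\<chi> r. N$r$Inl i) \<bullet> (A *v (\<chi> r. N$r$Inl i)) = d i"
    using arg_cong[OF NA, of "\<lambda>X. X $ Inl i $ Inl i"] by (simp add: congr_entry)
  show "(\<chi> r. N$r$Inr i) \<bullet> (A *v (\<chi> r. N$r$Inr i)) = d i"
    using arg_cong[OF NA, of "\<lambda>X. X $ Inr i $ Inr i"] by (simp add: congr_entry)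
qed

lemma prefix_eq_list:
  fixes xs ys :: "real list"
  assumes "length xs = length ys" "\<forall>k\<le>length xs. sum_list (take k xs) = sum_list (take k ys)"
  shows "xs = ys"
proof (rule nth_equalityI)
  show "length xs = length ys" by fact
  fix j assume j: "j < length xs"
  have "xs ! j = sum_list (take (Suc j) xs) - sum_list (take j xs)"
    using j by (simp add: take_Suc_conv_app_nth)
  also have "\<dots> = sum_list (take (Suc j) ys) - sum_list (take j ys)"
    using assms(2) j by simp
  also have "\<dots> = ys ! j" using j assms(1) by (simp add: take_Suc_conv_app_nth)
  finally show "xs ! j = ys ! j" .
qed

definition WF :: "('n::finite) smat \<Rightarrow> real list \<Rightarrow> bool" where
  "WF A ds \<longleftrightarrow> sorted ds \<and>
      (\<exists>M d. symplectic M \<and> (\<forall>i. 0 \<le> d i) \<and>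
             transpose M ** A ** M = diag_dsum d \<and>
             mset ds = image_mset d (mset_set (UNIV :: 'n set)))"

lemma symp_eigs_WF: "symp_eigs A = (THE ds. WF A ds)"
  by (simp add: symp_eigs_def WF_def)

lemma WF_exists:
  fixes A :: "('n::finite) smat"
  assumes "sym_psd A" "symplectic_subspace (kernel A)"
  shows "\<exists>ds. WF A ds"
proof -
  obtain M d where Md: "symplectic M" "\<forall>i. 0 \<le> d i" "transpose M ** A ** M = diag_dsum d"
    using williamson[OF assms] by blast
  obtain ds where "sorted ds" "mset ds = image_mset d (mset_set (UNIV :: 'n set))"
    using sorted_exists[of d] by blast
  then show ?thesis using Md unfolding WF_def by blast
qed

lemma WF_length: "WF (A::('n::finite) smat) ds \<Longrightarrow> length ds = CARD('n)"
  unfolding WF_def using length_ds by blast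

lemma prefix_le:
  fixes A :: "('n::finite) smat"
  assumes w1: "WF A ds1" and w2: "WF A ds2" and k: "k \<le> CARD('n)"
  shows "sum_list (take k ds1) \<le> sum_list (take k ds2)"
proof -
  obtain N1 d1 where 1: "symplectic N1" "\<forall>i. 0 \<le> d1 i" "transpose N1 ** A ** N1 = diag_dsum d1"
      "mset ds1 = image_mset d1 (mset_set (UNIV :: 'n set))" "sorted ds1"
    using w1 unfolding WF_def by blast
  obtain N2 d2 where 2: "symplectic N2" "\<forall>i. 0 \<le> d2 i" "transpose N2 ** A ** N2 = diag_dsum d2"
      "mset ds2 = image_mset d2 (mset_set (UNIV :: 'n set))" "sorted ds2"
    using w2 unfolding WF_def by blast
  obtain S where S: "card S = k" "sum_list (take k ds2) = (\<Sum>p\<in>S. d2 p)"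
    using prefix_attained[OF 2(5) 2(4) k] by blast
  let ?e = "\<lambda>i. \<chi> r. N2$r$Inl i" and ?f = "\<lambda>i. \<chi> r. N2$r$Inr i"
  have "2 * sum_list (take (card S) ds1) \<le> (\<Sum>i\<in>S. ?e i \<bullet> (A *v ?e i) + ?f i \<bullet> (A *v ?f i))"
    by (rule family_lower[OF 1(1) 1(3) 1(2) 1(5) 1(4) columns_family(1)[OF 2(1) 2(3)]])
  also have "\<dots> = (\<Sum>i\<in>S. 2 * d2 i)"
    using columns_family(2,3)[OF 2(1) 2(3)] by simp
  finally show ?thesis using S by (simp add: sum_distrib_left[symmetric])
qed

lemma WF_unique:
  fixes A :: "('n::finite) smat"
  assumes "WF A ds1" "WF A ds2"
  shows "ds1 = ds2"
proof (rule prefix_eq_list)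
  show "length ds1 = length ds2" using WF_length assms by metis
  show "\<forall>k\<le>length ds1. sum_list (take k ds1) = sum_list (take k ds2)"
    using prefix_le[OF assms(1,2)] prefix_le[OF assms(2,1)] WF_length[OF assms(1)]
    by (metis order_antisym)
qed

lemma symp_eigs_eq:
  fixes A :: "('n::finite) smat"
  assumes "WF A ds"
  shows "symp_eigs A = ds"
  unfolding symp_eigs_WF using assms WF_unique by (metis the_equality)

lemma mat_sum_mv: "finite L \<Longrightarrow> (\<Sum>l\<in>L. F l) *v z = (\<Sum>l\<in>L. F l *v (z::real^'m::finite))"
  by (induct L rule: finite_induct) (auto simp: matrix_vector_mult_add_rdistrib)

theorem theorem3p4:
  fixes A B :: "('n::finite) smat"
    and m :: nat and M :: "nat \<Rightarrow> 'n smat" and lam :: "nat \<Rightarrow> real"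
  assumes "sym_psd A" and "symplectic_subspace (kernel A)"
    and "sym_psd B" and "symplectic_subspace (kernel B)"
    and "m \<ge> 1"
    and "\<forall>i<m. symplectic (M i)"
    and "\<forall>i<m. lam i > 0"
    and "(\<Sum>i<m. lam i) = 1"
    and "A = (\<Sum>i<m. lam i *\<^sub>R (transpose (M i) ** B ** M i))"
  shows "weak_supmaj (symp_eigs A) (symp_eigs B)"
proof -
  obtain dsA where wA: "WF A dsA" using WF_exists[OF assms(1,2)] by blast
  obtain dsB where wB: "WF B dsB" using WF_exists[OF assms(3,4)] by blast
  have eA: "symp_eigs A = dsA" and eB: "symp_eigs B = dsB" using symp_eigs_eq wA wB by auto
  obtain NA dA where a: "symplectic NA" "\<forall>i. 0 \<le> dA i" "transpose NA ** A ** NA = diag_dsum dA"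
      "mset dsA = image_mset dA (mset_set (UNIV :: 'n set))" "sorted dsA"
    using wA unfolding WF_def by blast
  obtain NB dB where b: "symplectic NB" "\<forall>i. 0 \<le> dB i" "transpose NB ** B ** NB = diag_dsum dB"
      "mset dsB = image_mset dB (mset_set (UNIV :: 'n set))" "sorted dsB"
    using wB unfolding WF_def by blast
  have lA: "length dsA = CARD('n)" and lB: "length dsB = CARD('n)" using WF_length wA wB by auto
  have qA: "z \<bullet> (A *v z) = (\<Sum>l<m. lam l * ((M l *v z) \<bullet> (B *v (M l *v z))))" for z
  proof -
    have "A *v z = (\<Sum>l<m. lam l *\<^sub>R ((transpose (M l) ** B ** M l) *v z))"
      unfolding assms(9) by (simp add: mat_sum_mv scaleR_matrix_vector_assoc)
    then show ?thesis by (simp add: inner_sum_right qf_congr)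
  qed
  have "sum_list (take k (sort dsB)) \<le> sum_list (take k (sort dsA))" if k: "1 \<le> k" "k \<le> length dsA" for k
  proof -
    have kn: "k \<le> CARD('n)" using k lA by simp
    obtain S where S: "card S = k" "sum_list (take k dsA) = (\<Sum>p\<in>S. dA p)"
      using prefix_attained[OF a(5) a(4) kn] by blast
    let ?e = "\<lambda>i. \<chi> r. NA$r$Inl i" and ?f = "\<lambda>i. \<chi> r. NA$r$Inr i"
    have sonA: "son S ?e ?f" by (rule columns_family(1)[OF a(1) a(3)])
    have "2 * sum_list (take k dsA) = (\<Sum>i\<in>S. ?e i \<bullet> (A *v ?e i) + ?f i \<bullet> (A *v ?f i))"
      using columns_family(2,3)[OF a(1) a(3)] S(2) by (simp add: sum_distrib_left)
    also have "\<dots> = (\<Sum>l<m. lam l * (\<Sum>i\<in>S. (M l *v ?e i) \<bullet> (B *v (M l *v ?e i)) + (M l *v ?f i) \<bullet> (B *v (M l *v ?f i))))"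
      unfolding qA by (simp add: sum_distrib_left sum.distrib[symmetric] distrib_left sum.swap[of _ S])
    also have "\<dots> \<ge> (\<Sum>l<m. lam l * (2 * sum_list (take k dsB)))"
    proof (rule sum_mono)
      fix l assume l: "l \<in> {..<m}"
      have sonl: "son S (\<lambda>i. M l *v ?e i) (\<lambda>i. M l *v ?f i)"
        using sonA symplectic_om[of "M l"] assms(6) l by (simp add: son_def)
      have "2 * sum_list (take k dsB) \<le> (\<Sum>i\<in>S. (M l *v ?e i) \<bullet> (B *v (M l *v ?e i)) + (M l *v ?f i) \<bullet> (B *v (M l *v ?f i)))"
        using family_lower[OF b(1) b(3) b(2) b(5) b(4) sonl] S(1) by simp
      then show "lam l * (2 * sum_list (take k dsB)) \<le> lam l * (\<Sum>i\<in>S. (M l *v ?e i) \<bullet> (B *v (M l *v ?e i)) + (M l *v ?f i) \<bullet> (B *v (M l *v ?f i)))"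
        using assms(7) l by (intro mult_left_mono) auto
    qed
    also have "(\<Sum>l<m. lam l * (2 * sum_list (take k dsB))) = 2 * sum_list (take k dsB)"
      using assms(8) by (simp add: sum_distrib_right[symmetric])
    finally show ?thesis using a(5) b(5) by (simp add: sorted_sort_id)
  qed
  then show ?thesis unfolding weak_supmaj_def eA eB using lA lB by auto
qed

end
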